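(* Let $N$ be a positive even integer and let $\sigma\colon\{0,1\}^*\to\{0,1,\#\}^*$ be the substitution defined by $\sigma(0)=\#0^{N-1}$ and $\sigma(1)=\#1^{N-1}$. Let $\mathbf{w}$ be an infinite binary word. If an abelian power $u_0\cdots u_{e-1}$ with $e\ge N$ occurs in $\sigma(\mathbf{w})$, then $N$ divides $|u_0|$.
   Context: Two finite words $u,v$ are abelian equivalent, written $u\sim v$, if they are permutations of each other. An abelian power of exponent $e$ (a positive integer) and period $m$ is a word of the form $u_0u_1\cdots u_{e-1}$ where $u_0,\dots,u_{e-1}$ are nonempty, pairwise abelian equivalent, and $m=|u_0|$. The image $\sigma(\mathbf{w})$ of an infinite word is obtained by applying $\sigma$ letter by letter. *)

theory Defs
  imports Main "HOL-Library.Multiset"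
begin

datatype letter = Zero | One | Hash

definition abel_equiv :: "'a list \<Rightarrow> 'a list \<Rightarrow> bool" where
  "abel_equiv u v \<longleftrightarrow> mset u = mset v"

definition abelian_power :: "'a list list \<Rightarrow> nat \<Rightarrow> bool" where
  "abelian_power us e \<longleftrightarrow> length us = e \<and> e \<ge> 1 \<and> (\<forall>u\<in>set us. u \<noteq> []) \<and>
     (\<forall>i<e. \<forall>j<e. abel_equiv (us ! i) (us ! j))"

definition occurs_in :: "'a list \<Rightarrow> (nat \<Rightarrow> 'a) \<Rightarrow> bool" where
  "occurs_in x s \<longleftrightarrow> (\<exists>i. x = map s [i..<i + length x])"

text \<open>The substitution sigma on letters: 0 \<mapsto> # 0^(N-1), 1 \<mapsto> # 1^(N-1).
  Binary letters are encoded as bool (False = 0, True = 1).\<close>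
definition sigma :: "nat \<Rightarrow> bool \<Rightarrow> letter list" where
  "sigma N b = Hash # replicate (N - 1) (if b then One else Zero)"

text \<open>Image of an infinite word by applying a substitution letter by letter
  (concatenation of the images), for substitutions whose images are nonempty.\<close>
definition subst_inf :: "('a \<Rightarrow> 'b list) \<Rightarrow> (nat \<Rightarrow> 'a) \<Rightarrow> nat \<Rightarrow> 'b" where
  "subst_inf f w n = (let k = (LEAST k. n < (\<Sum>j\<le>k. length (f (w j))))
                      in f (w k) ! (n - (\<Sum>j<k. length (f (w j)))))"

end

theory Submission
  imports Defs
begin

lemma s_hash:
  assumes N: "N > 0"
  shows "(subst_inf (sigma N) w n = Hash) \<longleftrightarrow> n mod N = 0"
proof -
  have len: "\<And>b. length (sigma N b) = N" using N by (simp add: sigma_def)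
  have L: "(LEAST k. n < (\<Sum>j\<le>k. length (sigma N (w j)))) = n div N"
  proof (rule Least_equality)
    show "n < (\<Sum>j\<le>n div N. length (sigma N (w j)))"
      using N by (simp add: len) (metis add.commute dividend_less_div_times mult.commute)
  next
    fix y assume "n < (\<Sum>j\<le>y. length (sigma N (w j)))"
    hence "n < (Suc y) * N" by (simp add: len)
    thus "n div N \<le> y" using N by (metis less_Suc_eq_le less_mult_imp_div_less)
  qed
  have S: "(\<Sum>j<n div N. length (sigma N (w j))) = n div N * N" by (simp add: len)
  have "subst_inf (sigma N) w n = sigma N (w (n div N)) ! (n mod N)"
    unfolding subst_inf_def Let_def L S by (simp add: minus_div_mult_eq_mod)
  moreover have "n mod N < N" using N by simp
  ultimately show ?thesis
    by (cases "n mod N") (auto simp: sigma_def)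
qed

lemma window1:
  assumes N: "N > 0"
  shows "length (filter (\<lambda>n. n mod N = 0) [a..<a+N]) = 1"
proof (induction a)
  case 0
  have "[0..<N] = 0 # [1..<N]" using N by (simp add: upt_rec)
  moreover have "filter (\<lambda>n. n mod N = 0) [1..<N] = []"
    by (auto simp: filter_empty_conv)
  ultimately show ?case by simp
next
  case (Suc a)
  have e1: "[a..<a+N] = a # [Suc a..<a+N]" using N by (simp add: upt_rec)
  have e2: "[Suc a..<Suc a+N] = [Suc a..<a+N] @ [a+N]" using N by simp
  have m: "(a+N) mod N = a mod N" by simp
  have "length (filter (\<lambda>n. n mod N = 0) [Suc a..<a+N]) + (if a mod N = 0 then 1 else 0) = 1"
    using Suc e1 by (cases "a mod N = 0") auto
  then show ?case unfolding e2 using m by (cases "a mod N = 0") auto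
qed

lemma windowk:
  assumes N: "N > 0"
  shows "length (filter (\<lambda>n. n mod N = 0) [a..<a+N*k]) = k"
proof (induction k)
  case 0 then show ?case by simp
next
  case (Suc k)
  have "[a..<a+N*Suc k] = [a..<a+N*k] @ [a+N*k..<a+N*k+N]"
  proof -
    have eq: "a+N*Suc k = a+N*k+N" by simp
    show ?thesis unfolding eq by (rule upt_add_eq_append) simp
  qed
  then show ?case using Suc window1[OF N, of "a+N*k"] by simp
qed

lemma len_filter_concat:
  "length (filter P (concat xs)) = sum_list (map (\<lambda>x. length (filter P x)) xs)"
  by (induction xs) auto

lemma sum_list_const:
  "(\<forall>x\<in>set xs. f x = c) \<Longrightarrow> sum_list (map f xs) = length xs * (c::nat)"
  by (induction xs) auto

theorem lemma2:
  fixes N :: nat and w :: "nat \<Rightarrow> bool" and us :: "letter list list" and e :: nat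
  assumes "N > 0" and "even N"
    and "abelian_power us e" and "e \<ge> N"
    and "occurs_in (concat us) (subst_inf (sigma N) w)"
  shows "N dvd length (hd us)"
proof -
  define s where "s = subst_inf (sigma N) w"
  define m where "m = length (hd us)"
  define c where "c = length (filter ((=) Hash) (hd us))"
  define vs where "vs = take N us"
  have len: "length us = e" and e1: "e \<ge> 1" and ab: "\<forall>i<e. \<forall>j<e. abel_equiv (us ! i) (us ! j)"
    using assms(3) unfolding abelian_power_def by auto
  have hd0: "hd us = us ! 0" proof (rule hd_conv_nth)
    show "us \<noteq> []" using len e1 by auto
  qed
  have ms: "\<forall>x\<in>set vs. mset x = mset (hd us)"
  proof
    fix x assume "x \<in> set vs"
    then obtain i where "i < length vs" "x = vs ! i" by (auto simp: in_set_conv_nth)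
    hence "i < e" "x = us ! i" using len by (auto simp: vs_def)
    hence "abel_equiv (us ! i) (us ! 0)" using ab e1 by simp
    thus "mset x = mset (hd us)" unfolding abel_equiv_def hd0 using \<open>x = us ! i\<close> by simp
  qed
  have lv: "length vs = N" using len assms(4) by (simp add: vs_def)
  have lenc: "length (concat vs) = N * m"
  proof -
    have "\<forall>x\<in>set vs. length x = m" using ms unfolding m_def by (metis size_mset)
    hence "sum_list (map length vs) = N * m" using sum_list_const[of vs length m] lv by simp
    thus ?thesis by (simp add: length_concat)
  qed
  have hc: "length (filter ((=) Hash) (concat vs)) = N * c"
  proof -
    have "\<forall>x\<in>set vs. length (filter ((=) Hash) x) = c"
      using ms unfolding c_def by (metis mset_filter size_mset)
    thus ?thesis using sum_list_const[of vs _ c] lv by (simp add: len_filter_concat)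
  qed
  obtain p where p: "concat us = map s [p..<p + length (concat us)]"
    using assms(5) unfolding occurs_in_def s_def by auto
  have "concat us = concat vs @ concat (drop N us)"
    by (metis append_take_drop_id concat_append vs_def)
  hence cu: "concat us = concat vs @ concat (drop N us)" .
  hence le: "N*m \<le> length (concat us)" using lenc by simp
  have "concat vs = take (N*m) (concat us)" using lenc cu by simp
  also have "\<dots> = take (N*m) (map s [p..<p + length (concat us)])" using p by simp
  also have "\<dots> = map s (take (N*m) [p..<p + length (concat us)])" by (rule take_map)
  also have "take (N*m) [p..<p + length (concat us)] = [p..<p + N*m]"
    using le by (simp add: take_upt)
  finally have cv: "concat vs = map s [p..<p + N*m]" .
  have "length (filter ((=) Hash) (concat vs)) = length (filter (\<lambda>n. n mod N = 0) [p..<p+N*m])"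
    unfolding cv filter_map length_map
  proof (intro arg_cong[where f=length] filter_cong refl)
    fix n show "((=) Hash \<circ> s) n = (n mod N = 0)"
      using s_hash[OF assms(1), of w n] unfolding s_def comp_def by auto
  qed
  also have "\<dots> = m" using windowk[OF assms(1)] by simp
  finally have "m = N * c" using hc by simp
  thus ?thesis unfolding m_def by simp
qed

end
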